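(* Let $m\ge n$, let $a<b$ be real numbers, and let $F:[a,b]\rightarrow M_{m\times n}(\mathbb{C})$ be a function whose entries are analytic functions on $[a,b]$. Let $\mathcal{W}$ be the set of $x\in[a,b]$ for which $F(x)$ has repeated singular values. Then either $\mathcal{W}=[a,b]$ or $\mathcal{W}$ is finite.
   Context: $M_{m\times n}(\mathbb{C})$ denotes the set of $m\times n$ complex matrices; throughout $m\ge n$. The singular values of $A\in M_{m\times n}(\mathbb{C})$ are the $n$ nonnegative square roots of the eigenvalues of $A^{\ast}A$, counted with multiplicity; repeated means two of them coincide. A complex-valued function is analytic on $[a,b]$ if it is the restriction of a function defined on an open interval containing $[a,b]$ which around each point is given by a convergent power series. *)

theory Defs
  imports "Jordan_Normal_Form.Char_Poly"
begin

definition conj_transpose :: "complex mat \<Rightarrow> complex mat" where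
  "conj_transpose A = transpose_mat (map_mat cnj A)"

text \<open>The eigenvalues of A^* A are real and nonnegative, so taking the real part is harmless.\<close>
definition singular_values :: "complex mat \<Rightarrow> real multiset" where
  "singular_values A =
     image_mset (\<lambda>z. sqrt (Re z)) (proots (char_poly (conj_transpose A * A)))"

definition has_repeated_singular_values :: "complex mat \<Rightarrow> bool" where
  "has_repeated_singular_values A \<longleftrightarrow> (\<exists>s. 2 \<le> count (singular_values A) s)"

definition analytic_on_interval :: "real \<Rightarrow> real \<Rightarrow> (real \<Rightarrow> complex) \<Rightarrow> bool" where
  "analytic_on_interval a b f \<longleftrightarrow>
     (\<exists>c d g. c < a \<and> b < d \<and> (\<forall>x\<in>{a..b}. g x = f x) \<and>
        (\<forall>x0\<in>{c<..<d}. \<exists>r>0. \<exists>coef :: nat \<Rightarrow> complex.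
            \<forall>x. c < x \<and> x < d \<and> \<bar>x - x0\<bar> < r \<longrightarrow>
                (\<lambda>k. coef k * complex_of_real (x - x0) ^ k) sums g x))"

end

theory Submission imports Defs "Jordan_Normal_Form.Schur_Decomposition" "HOL-Complex_Analysis.Complex_Analysis" begin

definition mtr :: "complex mat \<Rightarrow> complex" where
  "mtr A = (\<Sum>i<dim_row A. A $$ (i,i))"

lemma mtr_comm:
  assumes A: "A \<in> carrier_mat n k" and B: "B \<in> carrier_mat k n"
  shows "mtr (A*B) = mtr (B*A)"
proof -
  have "mtr (A*B) = (\<Sum>i<n. \<Sum>j<k. A$$(i,j) * B$$(j,i))"
    using A B by (auto simp: mtr_def scalar_prod_def atLeast0LessThan intro!: sum.cong)
  also have "\<dots> = (\<Sum>j<k. \<Sum>i<n. B$$(j,i) * A$$(i,j))"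
    by (subst sum.swap) (simp add: mult.commute)
  also have "\<dots> = mtr (B*A)"
    using A B by (auto simp: mtr_def scalar_prod_def atLeast0LessThan intro!: sum.cong)
  finally show ?thesis .
qed

lemma upper_tri_pow:
  assumes T: "(T :: complex mat) \<in> carrier_mat n n" and ut: "upper_triangular T"
  shows "upper_triangular (T ^\<^sub>m k) \<and> (\<forall>i<n. (T ^\<^sub>m k) $$ (i,i) = T $$ (i,i) ^ k)"
proof (induction k)
  case 0
  then show ?case using T by auto
next
  case (Suc k)
  let ?X = "T ^\<^sub>m k"
  have X: "?X \<in> carrier_mat n n" using T by simp
  have uX: "upper_triangular ?X" and dX: "\<And>i. i < n \<Longrightarrow> ?X $$ (i,i) = T $$ (i,i) ^ k"
    using Suc by auto
  have prod: "(?X * T) $$ (i,j) = (\<Sum>l\<in>{0..<n}. ?X $$ (i,l) * T $$ (l,j))" if "i < n" "j < n" for i j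
    using X T that by (simp add: scalar_prod_def)
  have "upper_triangular (?X * T)"
  proof (rule upper_triangularI)
    fix i j assume ji: "j < i" and i: "i < dim_row (?X * T)"
    hence i': "i < n" using X T by simp
    have "(\<Sum>l\<in>{0..<n}. ?X $$ (i,l) * T $$ (l,j)) = 0"
    proof (rule sum.neutral, intro ballI)
      fix l assume l: "l \<in> {0..<n}"
      show "?X $$ (i,l) * T $$ (l,j) = 0"
      proof (cases "l < i")
        case True then show ?thesis using upper_triangularD[OF uX True] i' X T by simp
      next
        case False then have "j < l" using ji by simp
        then show ?thesis using upper_triangularD[OF ut \<open>j < l\<close>] l T by simp
      qed
    qed
    then show "(?X * T) $$ (i,j) = 0" using prod[of i j] i' ji by simp
  qed
  moreover have "(?X * T) $$ (i,i) = T $$ (i,i) ^ Suc k" if i: "i < n" for i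
  proof -
    have "(\<Sum>l\<in>{0..<n}. ?X $$ (i,l) * T $$ (l,i)) = (\<Sum>l\<in>{0..<n}. if l = i then T $$ (i,i) ^ k * T $$ (i,i) else 0)"
    proof (rule sum.cong[OF refl])
      fix l assume l: "l \<in> {0..<n}"
      show "?X $$ (i,l) * T $$ (l,i) = (if l = i then T $$ (i,i) ^ k * T $$ (i,i) else 0)"
      proof (cases "l < i")
        case True then show ?thesis using upper_triangularD[OF uX True] i X T by simp
      next
        case False
        show ?thesis
        proof (cases "l = i")
          case True then show ?thesis using dX i by simp
        next
          case False2: False
          then have "i < l" using False by simp
          then show ?thesis using upper_triangularD[OF ut \<open>i < l\<close>] l T False2 by simp
        qed
      qed
    qed
    then show ?thesis using prod[OF i i] i by (simp add: mult.commute)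
  qed
  ultimately show ?case by simp
qed

lemma vander_det:
  fixes es :: "complex list"
  assumes len: "length es = n"
  defines "V \<equiv> Matrix.mat n n (\<lambda>(l,i). es ! l ^ i)"
  shows "Determinant.det V = 0 \<longleftrightarrow> \<not> distinct es"
proof
  assume d: "Determinant.det V = 0"
  show "\<not> distinct es"
  proof
    assume dist: "distinct es"
    have Vc: "V \<in> carrier_mat n n" unfolding V_def by simp
    from d det_0_iff_vec_prod_zero[OF Vc] obtain v where
      v: "v \<in> carrier_vec n" "v \<noteq> 0\<^sub>v n" "V *\<^sub>v v = 0\<^sub>v n" by blast
    define p where "p = (\<Sum>i<n. monom (v $ i) i)"
    have cp: "coeff p j = (if j < n then v $ j else 0)" for j
      unfolding p_def by (simp add: coeff_sum)
    obtain i where i: "i < n" "v $ i \<noteq> 0" using v by (metis eq_vecI index_zero_vec(1) carrier_vecD index_zero_vec(2))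
    have p0: "p \<noteq> 0" using cp[of i] i by auto
    have n0: "n > 0" using i by simp
    have dg: "degree p \<le> n - 1"
      by (rule degree_le) (use cp in auto)
    have roots: "set es \<subseteq> {x. poly p x = 0}"
    proof
      fix x assume "x \<in> set es"
      then obtain l where l: "l < n" "x = es ! l" using len by (auto simp: in_set_conv_nth)
      have "(V *\<^sub>v v) $ l = (\<Sum>i<n. es ! l ^ i * v $ i)"
        using l v(1) unfolding V_def by (simp add: scalar_prod_def atLeast0LessThan row_def)
      moreover have "poly p x = (\<Sum>i<n. v $ i * x ^ i)"
        unfolding p_def by (simp add: poly_sum poly_monom)
      ultimately show "x \<in> {x. poly p x = 0}" using v(3) l by (simp add: mult.commute)
    qed
    have "n = card (set es)" using dist len by (simp add: distinct_card)
    also have "\<dots> \<le> card {x. poly p x = 0}"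
      by (rule card_mono[OF poly_roots_finite[OF p0] roots])
    also have "\<dots> \<le> degree p" by (rule card_poly_roots_bound[OF p0])
    finally show False using dg n0 by simp
  qed
next
  assume "\<not> distinct es"
  then obtain i j where ij: "i < n" "j < n" "i \<noteq> j" "es ! i = es ! j"
    using len by (auto simp: distinct_conv_nth)
  show "Determinant.det V = 0"
    by (rule Determinant.det_identical_rows[OF _ ij(3) ij(1) ij(2)]) (use ij in \<open>auto simp: V_def intro!: eq_vecI\<close>)
qed


lemma ct_carrier: "A \<in> carrier_mat m n \<Longrightarrow> conj_transpose A \<in> carrier_mat n m"
  by (auto simp: conj_transpose_def)

lemma ct_index: "A \<in> carrier_mat m n \<Longrightarrow> i < n \<Longrightarrow> j < m \<Longrightarrow> conj_transpose A $$ (i,j) = cnj (A $$ (j,i))"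
  by (auto simp: conj_transpose_def)

lemma eig_nonneg:
  assumes A: "A \<in> carrier_mat m n"
    and e: "poly (char_poly (conj_transpose A * A)) e = 0"
  shows "Re e \<ge> 0 \<and> e = complex_of_real (Re e)"
proof -
  let ?B = "conj_transpose A * A"
  have B: "?B \<in> carrier_mat n n" using A ct_carrier[OF A] by auto
  from e eigenvalue_root_char_poly[OF B] have "eigenvalue ?B e" by simp
  then obtain v where v: "v \<in> carrier_vec n" "v \<noteq> 0\<^sub>v n" "?B *\<^sub>v v = e \<cdot>\<^sub>v v"
    unfolding eigenvalue_def eigenvector_def using B by auto
  define w where "w = A *\<^sub>v v"
  have w: "w \<in> carrier_vec m" using A v unfolding w_def by auto
  have Bv: "?B *\<^sub>v v = conj_transpose A *\<^sub>v w"
    unfolding w_def using A v ct_carrier[OF A] by (simp add: assoc_mult_mat_vec)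
  have "(\<Sum>i<n. cnj (v $ i) * (?B *\<^sub>v v) $ i) = e * (\<Sum>i<n. complex_of_real ((cmod (v $ i))^2))"
    using v by (simp add: sum_distrib_left complex_norm_square mult_ac del: of_real_power)
  moreover have "(\<Sum>i<n. cnj (v $ i) * (?B *\<^sub>v v) $ i) = (\<Sum>k<m. complex_of_real ((cmod (w $ k))^2))"
  proof -
    have "(\<Sum>i<n. cnj (v $ i) * (?B *\<^sub>v v) $ i) = (\<Sum>i<n. cnj (v $ i) * (\<Sum>k<m. cnj (A $$ (k,i)) * w $ k))"
      unfolding Bv using ct_carrier[OF A] w A
      by (auto simp: scalar_prod_def atLeast0LessThan ct_index intro!: sum.cong)
    also have "\<dots> = (\<Sum>k<m. w $ k * cnj (\<Sum>i<n. A $$ (k,i) * v $ i))"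
      by (simp add: sum_distrib_left sum_distrib_right mult_ac sum.swap[of _ "{..<n}"])
    also have "\<dots> = (\<Sum>k<m. w $ k * cnj (w $ k))"
      unfolding w_def using A v by (auto simp: scalar_prod_def atLeast0LessThan intro!: sum.cong)
    finally show ?thesis by (simp add: complex_norm_square del: of_real_power)
  qed
  ultimately have eq: "e * complex_of_real (\<Sum>i<n. (cmod (v $ i))^2) = complex_of_real (\<Sum>k<m. (cmod (w $ k))^2)"
    by simp
  obtain i where i: "i < n" "v $ i \<noteq> 0" using v by (metis eq_vecI index_zero_vec(1) carrier_vecD index_zero_vec(2))
  have "(cmod (v $ i))^2 \<le> (\<Sum>i<n. (cmod (v $ i))^2)"
    by (rule member_le_sum) (use i in auto)
  hence S1: "(\<Sum>i<n. (cmod (v $ i))^2) > 0" using i by (smt (verit) zero_less_norm_iff zero_less_power)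
  have S2: "(\<Sum>k<m. (cmod (w $ k))^2) \<ge> 0" by (simp add: sum_nonneg)
  obtain s1 s2 where s: "s1 = (\<Sum>i<n. (cmod (v $ i))^2)" "s2 = (\<Sum>k<m. (cmod (w $ k))^2)" by blast
  have eq': "e * complex_of_real s1 = complex_of_real s2" using eq s by simp
  have "complex_of_real s1 \<noteq> 0" using S1 s(1) by (metis less_irrefl of_real_eq_0_iff)
  hence "e = complex_of_real s2 / complex_of_real s1" using eq' by (simp add: eq_divide_eq)
  hence "e = complex_of_real (s2 / s1)" by simp
  then show ?thesis using S1 S2 s by simp
qed


definition disc :: "complex mat \<Rightarrow> complex" where
  "disc A = Determinant.det (Matrix.mat (dim_col A) (dim_col A)
      (\<lambda>(i,j). mtr ((conj_transpose A * A) ^\<^sub>m (i+j))))"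

lemma sum_list_singletons: "(\<Sum>e\<leftarrow>es. {#e#}) = mset es"
  by (induction es) auto

lemma proots_lin_prod: "proots (\<Prod>e\<leftarrow>es. [:- e, 1:]) = mset (es :: complex list)"
proof (induction es)
  case Nil then show ?case by simp
next
  case (Cons a es)
  have nz: "(\<Prod>e\<leftarrow>es. [:- e, 1:]) \<noteq> 0" by (auto simp: prod_list_zero_iff)
  have "proots (\<Prod>e\<leftarrow>a # es. [:- e, 1:]) = proots [:- a, 1:] + proots (\<Prod>e\<leftarrow>es. [:- e, 1:])"
    by (simp only: prod_list.Cons list.map) (rule proots_mult, auto simp: nz)
  then show ?case using Cons by (simp del: prod_list.Cons list.map)
qed

lemma not_distinct_count: "(\<exists>s. 2 \<le> count (mset xs) s) \<longleftrightarrow> \<not> distinct xs"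
proof
  assume "\<exists>s. 2 \<le> count (mset xs) s"
  then obtain s where "2 \<le> count (mset xs) s" by blast
  show "\<not> distinct xs"
  proof
    assume "distinct xs"
    hence "count (mset xs) s \<le> 1" unfolding distinct_count_atmost_1 by (metis le_numeral_extra(4) zero_le)
    with \<open>2 \<le> count (mset xs) s\<close> show False by simp
  qed
next
  assume "\<not> distinct xs"
  then obtain a where a: "count (mset xs) a \<noteq> (if a \<in> set xs then 1 else 0)"
    by (auto simp: distinct_count_atmost_1)
  then have "a \<in> set xs" by (metis count_mset_0_iff)
  then have c1: "count (mset xs) a \<ge> 1" by (simp add: Suc_le_eq)
  have c2: "count (mset xs) a \<noteq> 1" using a \<open>a \<in> set xs\<close> by simp
  have "2 \<le> count (mset xs) a" using c1 c2 by linarith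
  then show "\<exists>s. 2 \<le> count (mset xs) s" by blast
qed

lemma key_alg:
  assumes A: "A \<in> carrier_mat m n"
  shows "has_repeated_singular_values A \<longleftrightarrow> disc A = 0"
proof -
  let ?B = "conj_transpose A * A"
  have B: "?B \<in> carrier_mat n n" using A ct_carrier[OF A] by auto
  obtain es where es: "char_poly ?B = (\<Prod>e\<leftarrow>es. [:- e, 1:])" "length es = n"
    using char_poly_factorized[OF B] by blast
  obtain T P Q where sd: "schur_decomposition ?B es = (T,P,Q)"
    by (cases "schur_decomposition ?B es") auto
  from schur_decomposition[OF B es(1) sd]
  have wit: "similar_mat_wit ?B T P Q" and ut: "upper_triangular T" and dT: "diag_mat T = es"
    by auto
  from wit B have T: "T \<in> carrier_mat n n" and P: "P \<in> carrier_mat n n" and Q: "Q \<in> carrier_mat n n"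
    and QP: "Q * P = 1\<^sub>m n"
    unfolding similar_mat_wit_def Let_def by auto
  have Tl: "T $$ (l,l) = es ! l" if "l < n" for l
    using dT[symmetric] that T unfolding diag_mat_def by auto
  have pw: "mtr (?B ^\<^sub>m k) = (\<Sum>l<n. es ! l ^ k)" for k
  proof -
    let ?Tk = "T ^\<^sub>m k"
    have Tk: "?Tk \<in> carrier_mat n n" using T by simp
    have "?B ^\<^sub>m k = P * ?Tk * Q" by (rule similar_mat_wit_pow_id[OF wit])
    hence "mtr (?B ^\<^sub>m k) = mtr ((P * ?Tk) * Q)" by simp
    also have "\<dots> = mtr (Q * (P * ?Tk))" by (rule mtr_comm[of _ n n]) (use P Tk Q in auto)
    also have "Q * (P * ?Tk) = (Q * P) * ?Tk" using P Q Tk by (simp add: assoc_mult_mat)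
    also have "\<dots> = ?Tk" using QP Tk by (simp add: left_mult_one_mat)
    also have "mtr ?Tk = (\<Sum>l<n. T $$ (l,l) ^ k)"
      using upper_tri_pow[OF T ut, of k] Tk T by (simp add: mtr_def)
    finally show ?thesis using Tl by simp
  qed
  define V where "V = Matrix.mat n n (\<lambda>(l,i). es ! l ^ i)"
  have V: "V \<in> carrier_mat n n" unfolding V_def by simp
  have H: "Matrix.mat n n (\<lambda>(i,j). mtr (?B ^\<^sub>m (i+j))) = transpose_mat V * V"
    by (rule eq_matI) (auto simp: pw V_def scalar_prod_def atLeast0LessThan power_add)
  have dA: "dim_col A = n" using A by simp
  have discV: "disc A = Determinant.det V * Determinant.det V"
    unfolding disc_def dA H using V by (simp add: Determinant.det_mult[of _ n] Determinant.det_transpose)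
  have roots: "proots (char_poly ?B) = mset es"
    unfolding es(1) by (rule proots_lin_prod)
  have nonneg: "Re e \<ge> 0 \<and> e = complex_of_real (Re e)" if "e \<in> set es" for e
  proof (rule eig_nonneg[OF A])
    have nz: "char_poly ?B \<noteq> 0" unfolding es(1) by (auto simp: prod_list_zero_iff)
    have "e \<in> set_mset (proots (char_poly ?B))" using that roots by simp
    then show "poly (char_poly ?B) e = 0" using nz by simp
  qed
  have inj: "inj_on (\<lambda>z. sqrt (Re z)) (set es)"
  proof (rule inj_onI)
    fix x y assume x: "x \<in> set es" and y: "y \<in> set es" and eq: "sqrt (Re x) = sqrt (Re y)"
    then have "Re x = Re y" by simp
    then show "x = y" using nonneg[OF x] nonneg[OF y] by metis
  qed
  have "has_repeated_singular_values A \<longleftrightarrow> \<not> distinct (map (\<lambda>z. sqrt (Re z)) es)"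
    unfolding has_repeated_singular_values_def singular_values_def roots
    by (simp add: not_distinct_count[symmetric])
  also have "\<dots> \<longleftrightarrow> \<not> distinct es" using inj by (simp add: distinct_map)
  also have "\<dots> \<longleftrightarrow> Determinant.det V = 0" using vander_det[OF es(2)] V_def by simp
  also have "\<dots> \<longleftrightarrow> disc A = 0" using discV by simp
  finally show ?thesis .
qed


definition ra :: "real \<Rightarrow> real \<Rightarrow> (real \<Rightarrow> complex) \<Rightarrow> bool" where
  "ra a b h \<longleftrightarrow> (\<forall>x0\<in>{a..b}. \<exists>r>0. \<exists>G. G analytic_on ball (complex_of_real x0) r \<and>
      (\<forall>x. \<bar>x - x0\<bar> < r \<longrightarrow> G (complex_of_real x) = h x))"

lemma ra_const: "ra a b (\<lambda>x. c)"
  unfolding ra_def by (intro ballI exI[of _ 1] conjI exI[of _ "\<lambda>_. c"]) auto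

lemma ra_binop:
  assumes f: "ra a b f" and g: "ra a b g"
    and op: "\<And>F G S. F analytic_on S \<Longrightarrow> G analytic_on S \<Longrightarrow> (\<lambda>z. H (F z) (G z)) analytic_on S"
  shows "ra a b (\<lambda>x. H (f x) (g x))"
  unfolding ra_def
proof
  fix x0 assume x0: "x0 \<in> {a..b}"
  from f x0 obtain r1 F where r1: "r1 > 0" "F analytic_on ball (complex_of_real x0) r1"
    "\<forall>x. \<bar>x - x0\<bar> < r1 \<longrightarrow> F (complex_of_real x) = f x" unfolding ra_def by blast
  from g x0 obtain r2 G where r2: "r2 > 0" "G analytic_on ball (complex_of_real x0) r2"
    "\<forall>x. \<bar>x - x0\<bar> < r2 \<longrightarrow> G (complex_of_real x) = g x" unfolding ra_def by blast
  let ?r = "min r1 r2"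
  have "F analytic_on ball (complex_of_real x0) ?r" by (rule analytic_on_subset[OF r1(2)]) auto
  moreover have "G analytic_on ball (complex_of_real x0) ?r" by (rule analytic_on_subset[OF r2(2)]) auto
  ultimately have "(\<lambda>z. H (F z) (G z)) analytic_on ball (complex_of_real x0) ?r" by (rule op)
  moreover have "\<forall>x. \<bar>x - x0\<bar> < ?r \<longrightarrow> H (F (complex_of_real x)) (G (complex_of_real x)) = H (f x) (g x)"
    using r1(3) r2(3) by auto
  ultimately show "\<exists>r>0. \<exists>G. G analytic_on ball (complex_of_real x0) r \<and>
      (\<forall>x. \<bar>x - x0\<bar> < r \<longrightarrow> G (complex_of_real x) = H (f x) (g x))"
    using r1(1) r2(1) by (intro exI[of _ ?r]) auto
qed

lemma ra_add: "ra a b f \<Longrightarrow> ra a b g \<Longrightarrow> ra a b (\<lambda>x. f x + g x)"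
  by (rule ra_binop[where H = "(+)"]) (auto intro: analytic_on_add)

lemma ra_mult: "ra a b f \<Longrightarrow> ra a b g \<Longrightarrow> ra a b (\<lambda>x. f x * g x)"
  by (rule ra_binop[where H = "(*)"]) (auto intro: analytic_on_mult)

lemma ra_sum: "finite S \<Longrightarrow> (\<And>i. i \<in> S \<Longrightarrow> ra a b (f i)) \<Longrightarrow> ra a b (\<lambda>x. \<Sum>i\<in>S. f i x)"
proof (induction S rule: finite_induct)
  case empty then show ?case by (simp add: ra_const)
next
  case (insert i S)
  then show ?case by (simp add: ra_add)
qed

lemma ra_prod: "finite S \<Longrightarrow> (\<And>i. i \<in> S \<Longrightarrow> ra a b (f i)) \<Longrightarrow> ra a b (\<lambda>x. \<Prod>i\<in>S. f i x)"
proof (induction S rule: finite_induct)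
  case empty then show ?case by (simp add: ra_const)
next
  case (insert i S)
  then show ?case by (simp add: ra_mult)
qed

lemma ra_cnj:
  assumes h: "ra a b h"
  shows "ra a b (\<lambda>x. cnj (h x))"
  unfolding ra_def
proof
  fix x0 assume x0: "x0 \<in> {a..b}"
  from h x0 obtain r G where r: "r > 0" "G analytic_on ball (complex_of_real x0) r"
    "\<forall>x. \<bar>x - x0\<bar> < r \<longrightarrow> G (complex_of_real x) = h x" unfolding ra_def by blast
  define c where "c n = (deriv ^^ n) G (complex_of_real x0) / fact n" for n
  have ps: "\<And>w. w \<in> ball (complex_of_real x0) r \<Longrightarrow> (\<lambda>n. c n * (w - complex_of_real x0)^n) sums G w"
    using r(2) unfolding analytic_iff_power_series c_def by blast
  have "(\<lambda>n. cnj (c n) * (w - complex_of_real x0)^n) sums cnj (G (cnj w))"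
    if w: "w \<in> ball (complex_of_real x0) r" for w
  proof -
    have "dist (complex_of_real x0) (cnj w) = dist (complex_of_real x0) w"
      by (metis complex_cnj_complex_of_real complex_cnj_diff complex_mod_cnj dist_norm)
    hence "cnj w \<in> ball (complex_of_real x0) r" using w by simp
    from ps[OF this] have "(\<lambda>n. cnj (c n * (cnj w - complex_of_real x0)^n)) sums cnj (G (cnj w))"
      by (simp only: sums_cnj)
    then show ?thesis by simp
  qed
  hence "(\<lambda>w. cnj (G (cnj w))) analytic_on ball (complex_of_real x0) r"
    by (rule power_series_analytic)
  moreover have "\<forall>x. \<bar>x - x0\<bar> < r \<longrightarrow> cnj (G (cnj (complex_of_real x))) = cnj (h x)"
    using r(3) by simp
  ultimately show "\<exists>r>0. \<exists>G. G analytic_on ball (complex_of_real x0) r \<and>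
      (\<forall>x. \<bar>x - x0\<bar> < r \<longrightarrow> G (complex_of_real x) = cnj (h x))"
    using r(1) by blast
qed

lemma ra_base:
  assumes "analytic_on_interval a b f"
  shows "\<exists>g. ra a b g \<and> (\<forall>x\<in>{a..b}. g x = f x)"
proof -
  from assms obtain c d g where cd: "c < a" "b < d" and gf: "\<forall>x\<in>{a..b}. g x = f x"
    and ps: "\<forall>x0\<in>{c<..<d}. \<exists>r>0. \<exists>coef :: nat \<Rightarrow> complex.
            \<forall>x. c < x \<and> x < d \<and> \<bar>x - x0\<bar> < r \<longrightarrow>
                (\<lambda>k. coef k * complex_of_real (x - x0) ^ k) sums g x"
    unfolding analytic_on_interval_def by blast
  have "ra a b g"
    unfolding ra_def
  proof
    fix x0 assume x0: "x0 \<in> {a..b}"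
    then have "x0 \<in> {c<..<d}" using cd by auto
    with ps obtain r coef where r: "r > 0" and
      s: "\<forall>x. c < x \<and> x < d \<and> \<bar>x - x0\<bar> < r \<longrightarrow>
                (\<lambda>k. coef k * complex_of_real (x - x0) ^ k) sums g x" by blast
    define r' where "r' = min r (min (x0 - c) (d - x0))"
    have r'0: "r' > 0" using r x0 cd by (auto simp: r'_def)
    define G where "G w = (\<Sum>k. coef k * (w - complex_of_real x0) ^ k)" for w
    have sumsG: "(\<lambda>k. coef k * (w - complex_of_real x0) ^ k) sums G w"
      if w: "w \<in> ball (complex_of_real x0) r'" for w
    proof -
      define \<rho> where "\<rho> = (cmod (w - complex_of_real x0) + r') / 2"
      have wl: "cmod (w - complex_of_real x0) < r'" using w by (simp add: dist_norm norm_minus_commute)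
      have n0: "0 \<le> cmod (w - complex_of_real x0)" by simp
      have \<rho>1: "cmod (w - complex_of_real x0) < \<rho>" using wl unfolding \<rho>_def by simp
      have \<rho>2: "\<rho> < r'" using wl unfolding \<rho>_def by simp
      have \<rho>3: "0 \<le> \<rho>" using wl n0 r'0 unfolding \<rho>_def by simp
      note \<rho> = \<rho>1 \<rho>2 \<rho>3
      have r'le: "r' \<le> r" "r' \<le> x0 - c" "r' \<le> d - x0" unfolding r'_def by auto
      have cond: "c < x0 + \<rho> \<and> x0 + \<rho> < d \<and> \<bar>x0 + \<rho> - x0\<bar> < r"
        using \<rho> r'le by auto
      have "(\<lambda>k. coef k * complex_of_real (x0 + \<rho> - x0) ^ k) sums g (x0 + \<rho>)"
        using s cond by blast
      hence "summable (\<lambda>k. coef k * complex_of_real \<rho> ^ k)" by (simp add: sums_summable)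
      hence "summable (\<lambda>k. coef k * (w - complex_of_real x0) ^ k)"
        by (rule powser_inside) (use \<rho> in simp)
      then show ?thesis unfolding G_def by (simp add: summable_sums)
    qed
    hence "G analytic_on ball (complex_of_real x0) r'" by (rule power_series_analytic)
    moreover have "\<forall>x. \<bar>x - x0\<bar> < r' \<longrightarrow> G (complex_of_real x) = g x"
    proof (intro allI impI)
      fix x assume x: "\<bar>x - x0\<bar> < r'"
      have r'le: "r' \<le> r" "r' \<le> x0 - c" "r' \<le> d - x0" unfolding r'_def by auto
      have cond: "c < x \<and> x < d \<and> \<bar>x - x0\<bar> < r"
        using x r'le by (auto simp: abs_less_iff)
      then have "(\<lambda>k. coef k * complex_of_real (x - x0) ^ k) sums g x"
        using s by blast
      moreover have "complex_of_real x \<in> ball (complex_of_real x0) r'"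
        using x by (simp add: dist_norm abs_minus_commute flip: of_real_diff)
      from sumsG[OF this] have "(\<lambda>k. coef k * complex_of_real (x - x0) ^ k) sums G (complex_of_real x)"
        by (simp add: of_real_diff)
      ultimately show "G (complex_of_real x) = g x" using sums_unique2 by blast
    qed
    ultimately show "\<exists>r>0. \<exists>G. G analytic_on ball (complex_of_real x0) r \<and>
      (\<forall>x. \<bar>x - x0\<bar> < r \<longrightarrow> G (complex_of_real x) = g x)" using r'0 by blast
  qed
  with gf show ?thesis by blast
qed


definition ram :: "real \<Rightarrow> real \<Rightarrow> nat \<Rightarrow> nat \<Rightarrow> (real \<Rightarrow> complex mat) \<Rightarrow> bool" where
  "ram a b p q M \<longleftrightarrow> (\<forall>x. M x \<in> carrier_mat p q) \<and> (\<forall>i<p. \<forall>j<q. ra a b (\<lambda>x. M x $$ (i,j)))"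

lemma ra_cong: "ra a b f \<Longrightarrow> (\<And>x. f x = g x) \<Longrightarrow> ra a b g"
proof -
  assume "ra a b f" "\<And>x. f x = g x"
  moreover have "f = g" using \<open>\<And>x. f x = g x\<close> by blast
  ultimately show ?thesis by simp
qed

lemma ram_ct: assumes "ram a b p q M" shows "ram a b q p (\<lambda>x. conj_transpose (M x))"
  unfolding ram_def
proof (intro conjI allI impI)
  fix x show "conj_transpose (M x) \<in> carrier_mat q p" using assms ct_carrier unfolding ram_def by blast
next
  fix i j assume ij: "i < q" "j < p"
  have "ra a b (\<lambda>x. cnj (M x $$ (j,i)))" using assms ij ra_cnj unfolding ram_def by blast
  then show "ra a b (\<lambda>x. conj_transpose (M x) $$ (i, j))"
  proof (rule ra_cong)
    fix x have "M x \<in> carrier_mat p q" using assms unfolding ram_def by blast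
    then show "cnj (M x $$ (j,i)) = conj_transpose (M x) $$ (i, j)" using ct_index ij by metis
  qed
qed

lemma ram_mult: assumes M1: "ram a b p q M1" and M2: "ram a b q s M2"
  shows "ram a b p s (\<lambda>x. M1 x * M2 x)"
  unfolding ram_def
proof (intro conjI allI impI)
  fix x have "M1 x \<in> carrier_mat p q" "M2 x \<in> carrier_mat q s" using M1 M2 unfolding ram_def by blast+
  then show "M1 x * M2 x \<in> carrier_mat p s" by simp
next
  fix i j assume ij: "i < p" "j < s"
  have "ra a b (\<lambda>x. \<Sum>l\<in>{0..<q}. M1 x $$ (i,l) * M2 x $$ (l,j))"
    by (rule ra_sum) (use M1 M2 ij in \<open>auto simp: ram_def intro!: ra_mult\<close>)
  then show "ra a b (\<lambda>x. (M1 x * M2 x) $$ (i, j))"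
  proof (rule ra_cong)
    fix x have "M1 x \<in> carrier_mat p q" "M2 x \<in> carrier_mat q s" using M1 M2 unfolding ram_def by blast+
    then show "(\<Sum>l\<in>{0..<q}. M1 x $$ (i,l) * M2 x $$ (l,j)) = (M1 x * M2 x) $$ (i, j)"
      using ij by (simp add: scalar_prod_def)
  qed
qed

lemma ram_one: "ram a b p p (\<lambda>x. 1\<^sub>m p)"
  unfolding ram_def by (auto simp: ra_const)

lemma ram_pow: assumes M: "ram a b p p M" shows "ram a b p p (\<lambda>x. M x ^\<^sub>m k)"
proof (induction k)
  case 0
  have "ram a b p p (\<lambda>x. 1\<^sub>m p)" by (rule ram_one)
  moreover have "(\<lambda>x. M x ^\<^sub>m 0) = (\<lambda>x. 1\<^sub>m p)"
  proof
    fix x have "M x \<in> carrier_mat p p" using M unfolding ram_def by blast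
    then show "M x ^\<^sub>m 0 = 1\<^sub>m p" by simp
  qed
  ultimately show ?case by simp
next
  case (Suc k)
  then show ?case using ram_mult[OF Suc M] by simp
qed

lemma ra_mtr: assumes M: "ram a b p p M" shows "ra a b (\<lambda>x. mtr (M x))"
proof -
  have "ra a b (\<lambda>x. \<Sum>i<p. M x $$ (i,i))" by (rule ra_sum) (use M in \<open>auto simp: ram_def\<close>)
  then show ?thesis by (rule ra_cong) (use M in \<open>auto simp: ram_def mtr_def\<close>)
qed

lemma ra_det: assumes M: "ram a b p p M" shows "ra a b (\<lambda>x. Determinant.det (M x))"
proof -
  have "ra a b (\<lambda>x. \<Sum>\<pi> \<in> {\<pi>. \<pi> permutes {0 ..< p}}. signof \<pi> * (\<Prod>i = 0 ..< p. M x $$ (i, \<pi> i)))"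
  proof (rule ra_sum)
    show "finite {\<pi>. \<pi> permutes {0 ..< p}}" by (simp add: finite_permutations)
  next
    fix \<pi> assume \<pi>: "\<pi> \<in> {\<pi>. \<pi> permutes {0 ..< p}}"
    have "ra a b (\<lambda>x. \<Prod>i = 0 ..< p. M x $$ (i, \<pi> i))"
    proof (rule ra_prod)
      fix i assume i: "i \<in> {0..<p}"
      then have "\<pi> i < p" using \<pi> by (auto simp: permutes_in_image)
      then show "ra a b (\<lambda>x. M x $$ (i, \<pi> i))" using M i by (auto simp: ram_def)
    qed simp
    then show "ra a b (\<lambda>x. signof \<pi> * (\<Prod>i = 0 ..< p. M x $$ (i, \<pi> i)))"
      by (rule ra_mult[OF ra_const])
  qed
  then show ?thesis
  proof (rule ra_cong)
    fix x have "M x \<in> carrier_mat p p" using M unfolding ram_def by blast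
    then show "(\<Sum>\<pi> \<in> {\<pi>. \<pi> permutes {0 ..< p}}. signof \<pi> * (\<Prod>i = 0 ..< p. M x $$ (i, \<pi> i))) = Determinant.det (M x)"
      by (simp add: Determinant.det_def')
  qed
qed

lemma ra_disc: assumes M: "ram a b p q M" shows "ra a b (\<lambda>x. disc (M x))"
proof -
  let ?B = "\<lambda>x. conj_transpose (M x) * M x"
  have B: "ram a b q q ?B" by (rule ram_mult[OF ram_ct[OF M] M])
  let ?H = "\<lambda>x. Matrix.mat q q (\<lambda>(i,j). mtr (?B x ^\<^sub>m (i+j)))"
  have "ram a b q q ?H"
    unfolding ram_def using ra_mtr[OF ram_pow[OF B]] by auto
  from ra_det[OF this] show ?thesis
    by (rule ra_cong) (use M in \<open>auto simp: ram_def disc_def\<close>)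
qed


lemma ra_local_zero:
  assumes D: "ra a b D" and x0: "x0 \<in> {a..b}"
    and lim: "x0 islimpt {x\<in>{a..b}. D x = 0}"
  shows "\<exists>r>0. \<forall>x. \<bar>x - x0\<bar> < r \<longrightarrow> D x = 0"
proof -
  let ?ZZ = "{x\<in>{a..b}. D x = 0}"
  from D x0 obtain r G where r: "r > 0" "G analytic_on ball (complex_of_real x0) r"
    "\<forall>x. \<bar>x - x0\<bar> < r \<longrightarrow> G (complex_of_real x) = D x" unfolding ra_def by blast
  let ?S = "ball (complex_of_real x0) r"
  let ?U = "complex_of_real ` (?ZZ \<inter> {x. \<bar>x - x0\<bar> < r})"
  have dist_of_real: "dist (complex_of_real x) (complex_of_real y) = \<bar>x - y\<bar>" for x y
    by (simp add: dist_norm flip: of_real_diff)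
  have US: "?U \<subseteq> ?S" using dist_of_real by (auto simp: dist_commute)
  have xiS: "complex_of_real x0 \<in> ?S" using r by simp
  have lim': "complex_of_real x0 islimpt ?U"
    unfolding islimpt_approachable
  proof (intro allI impI)
    fix e :: real assume e: "e > 0"
    have er: "min e r > 0" using e r by simp
    with lim obtain x' where x': "x' \<in> ?ZZ" "x' \<noteq> x0" "dist x' x0 < min e r"
      unfolding islimpt_approachable by blast
    then have "complex_of_real x' \<in> ?U" by (auto simp: dist_real_def)
    moreover have "complex_of_real x' \<noteq> complex_of_real x0" using x' by simp
    moreover have "dist (complex_of_real x') (complex_of_real x0) < e"
      using x' dist_of_real by (simp add: dist_real_def)
    ultimately show "\<exists>x'\<in>?U. x' \<noteq> complex_of_real x0 \<and> dist x' (complex_of_real x0) < e" by blast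
  qed
  have Gz: "G z = 0" if "z \<in> ?U" for z
    using that r(3) by auto
  have "D x = 0" if x: "\<bar>x - x0\<bar> < r" for x
  proof -
    have w: "complex_of_real x \<in> ?S" using x dist_of_real by (simp add: abs_minus_commute)
    have "G (complex_of_real x) = 0"
      by (rule analytic_continuation[OF analytic_imp_holomorphic[OF r(2)] open_ball connected_ball US xiS lim' Gz w])
    then show ?thesis using r(3) x by simp
  qed
  then show ?thesis using r(1) by blast
qed

lemma ra_zero:
  assumes ab: "a < b" and D: "ra a b D"
  shows "(\<forall>x\<in>{a..b}. D x = 0) \<or> finite {x\<in>{a..b}. D x = 0}"
proof (rule disjCI)
  let ?ZZ = "{x\<in>{a..b}. D x = 0}"
  assume inf: "infinite ?ZZ"
  let ?Z = "{x\<in>{a..b}. x islimpt ?ZZ}"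
  obtain p where p: "p \<in> {a..b}" "p islimpt ?ZZ"
    using Heine_Borel_imp_Bolzano_Weierstrass[OF compact_Icc[of a b] inf] by blast
  have op: "openin (top_of_set {a..b}) ?Z"
    unfolding openin_euclidean_subtopology_iff
  proof (intro conjI ballI)
    show "?Z \<subseteq> {a..b}" by auto
  next
    fix x assume x: "x \<in> ?Z"
    from ra_local_zero[OF D] x obtain r where r: "r > 0" "\<forall>y. \<bar>y - x\<bar> < r \<longrightarrow> D y = 0" by auto
    show "\<exists>e>0. \<forall>x'\<in>{a..b}. dist x' x < e \<longrightarrow> x' \<in> ?Z"
    proof (intro exI[of _ r] conjI ballI impI)
      fix x' assume x': "x' \<in> {a..b}" "dist x' x < r"
      have "x' islimpt ?ZZ"
        unfolding islimpt_approachable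
      proof (intro allI impI)
        fix e :: real assume e: "e > 0"
        define \<mu> where "\<mu> = min (min e (r - \<bar>x' - x\<bar>)) (b - a)"
        define \<eta> where "\<eta> = \<mu> / 2"
        have \<mu>0: "\<mu> > 0" using e x' ab by (auto simp: \<mu>_def dist_real_def)
        have \<mu>1: "\<mu> \<le> e" "\<mu> \<le> r - \<bar>x' - x\<bar>" "\<mu> \<le> b - a" by (auto simp: \<mu>_def)
        have \<eta>0: "\<eta> > 0" "\<eta> < \<mu>" "2 * \<eta> = \<mu>" using \<mu>0 by (auto simp: \<eta>_def)
        have \<eta>1: "\<eta> < e" "\<eta> < r - \<bar>x' - x\<bar>" "2 * \<eta> \<le> b - a"
          using \<eta>0 \<mu>1 by auto
        define y where "y = (if x' + \<eta> \<le> b then x' + \<eta> else x' - \<eta>)"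
        have yab: "y \<in> {a..b}" using x' \<eta>0 \<eta>1 by (auto simp: y_def)
        have yd: "\<bar>y - x'\<bar> = \<eta>" using \<eta>0 by (auto simp: y_def)
        have "\<bar>y - x\<bar> < r" using yd \<eta>1 by (auto simp: abs_le_iff abs_less_iff)
        then have "D y = 0" using r by blast
        then show "\<exists>y\<in>?ZZ. y \<noteq> x' \<and> dist y x' < e"
          using yab yd \<eta>0 \<eta>1 by (intro bexI[of _ y]) (auto simp: dist_real_def)
      qed
      then show "x' \<in> ?Z" using x' by simp
    qed (use r in simp)
  qed
  have cl: "closedin (top_of_set {a..b}) ?Z"
    unfolding closedin_limpt
  proof (intro conjI allI impI)
    show "?Z \<subseteq> {a..b}" by auto
  next
    fix x assume x: "x islimpt ?Z \<and> x \<in> {a..b}"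
    then have "x islimpt {y. y islimpt ?ZZ}" by (auto intro: islimpt_subset)
    then have "x islimpt ?ZZ" by (rule limpt_of_limpts)
    then show "x \<in> ?Z" using x by simp
  qed
  from connected_Icc[of a b] op cl have "?Z = {} \<or> ?Z = {a..b}"
    unfolding connected_clopen by blast
  then have Z: "?Z = {a..b}" using p by auto
  show "\<forall>x\<in>{a..b}. D x = 0"
  proof
    fix x assume x: "x \<in> {a..b}"
    then have "x islimpt ?ZZ" using Z by blast
    from ra_local_zero[OF D x this] show "D x = 0" by auto
  qed
qed


theorem theorem4p5:
  fixes m n :: nat and a b :: real and F :: "real \<Rightarrow> complex mat"
  assumes "n \<le> m" and "a < b"
    and "\<forall>x\<in>{a..b}. F x \<in> carrier_mat m n"
    and "\<forall>i<m. \<forall>j<n. analytic_on_interval a b (\<lambda>x. F x $$ (i, j))"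
  shows "{x\<in>{a..b}. has_repeated_singular_values (F x)} = {a..b} \<or>
         finite {x\<in>{a..b}. has_repeated_singular_values (F x)}"
proof -
  have "\<forall>p. \<exists>gg. fst p < m \<and> snd p < n \<longrightarrow> ra a b gg \<and> (\<forall>x\<in>{a..b}. gg x = F x $$ (fst p, snd p))"
    using assms(4) ra_base by blast
  then obtain GG where GG: "\<And>p. fst p < m \<Longrightarrow> snd p < n \<Longrightarrow> ra a b (GG p) \<and> (\<forall>x\<in>{a..b}. GG p x = F x $$ (fst p, snd p))"
    by metis
  define Fg where "Fg x = Matrix.mat m n (\<lambda>ij. GG ij x)" for x
  have ramF: "ram a b m n Fg"
    unfolding ram_def
  proof (intro conjI allI impI)
    fix x show "Fg x \<in> carrier_mat m n" unfolding Fg_def by simp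
  next
    fix i j assume ij: "i < m" "j < n"
    have "ra a b (GG (i,j))" using GG[of "(i,j)"] ij by simp
    then show "ra a b (\<lambda>x. Fg x $$ (i, j))" by (rule ra_cong) (use ij in \<open>simp add: Fg_def\<close>)
  qed
  have FF: "Fg x = F x" if x: "x \<in> {a..b}" for x
  proof -
    have Fx: "F x \<in> carrier_mat m n" using x assms(3) by blast
    show ?thesis
    proof (rule eq_matI)
      fix i j assume ij: "i < dim_row (F x)" "j < dim_col (F x)"
      then have ij': "i < m" "j < n" using Fx by auto
      then show "Fg x $$ (i, j) = F x $$ (i, j)" using GG[of "(i,j)"] x by (simp add: Fg_def)
    qed (use Fx in \<open>auto simp: Fg_def\<close>)
  qed
  have W: "{x\<in>{a..b}. has_repeated_singular_values (F x)} = {x\<in>{a..b}. disc (Fg x) = 0}"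
  proof (rule Collect_cong)
    fix x show "(x \<in> {a..b} \<and> has_repeated_singular_values (F x)) = (x \<in> {a..b} \<and> disc (Fg x) = 0)"
    proof (cases "x \<in> {a..b}")
      case True
      then have "F x \<in> carrier_mat m n" using assms(3) by blast
      then show ?thesis using key_alg[of "F x" m n] FF[OF True] True by simp
    qed blast
  qed
  from ra_zero[OF assms(2) ra_disc[OF ramF]] show ?thesis
    unfolding W by auto
qed

end
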